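(* Let ${\rm Bin}(m,\theta)$ be a binomially distributed random variable with parameters $m\in\mathbb{N}$ and $\theta\in(0,1)$. Then $${\rm Var}\bigl(({\rm Bin}(m,\theta)-1)_+\bigr)={\rm Var}\bigl({\rm Bin}(m,\theta)-\mathbbm{1}_{\{{\rm Bin}(m,\theta)\ge1\}}\bigr)\le(m\theta)^2.$$
   Context: $x_+=\max(x,0)$. *)

theory Defs
  imports "HOL-Probability.Probability"
begin

end

theory Submission
  imports Defs
begin

definition Bs :: "real \<Rightarrow> nat \<Rightarrow> (nat \<Rightarrow> real) \<Rightarrow> real" where
  "Bs p n f = (\<Sum>k\<le>n. (real (n choose k) * p ^ k * (1 - p) ^ (n - k)) * f k)"

lemma Bs_lin: "Bs p n (\<lambda>k. a * f k + b * g k) = a * Bs p n f + b * Bs p n g"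
  unfolding Bs_def by (simp add: sum.distrib sum_distrib_left algebra_simps)

lemma Bs_Suc: "Bs p (Suc n) f = p * Bs p n (\<lambda>k. f (Suc k)) + (1 - p) * Bs p n f"
proof -
  let ?q = "1 - p"
  have A: "Bs p (Suc n) f = real (Suc n choose 0) * p^0 * ?q^(Suc n) * f 0
     + (\<Sum>j\<le>n. real (Suc n choose Suc j) * p ^ Suc j * ?q ^ (Suc n - Suc j) * f (Suc j))"
    unfolding Bs_def by (subst sum.atMost_Suc_shift) simp
  have B: "(\<Sum>j\<le>n. real (Suc n choose Suc j) * p ^ Suc j * ?q ^ (Suc n - Suc j) * f (Suc j))
     = (\<Sum>j\<le>n. real (n choose j) * p ^ Suc j * ?q ^ (n - j) * f (Suc j))
     + (\<Sum>j\<le>n. real (n choose Suc j) * p ^ Suc j * ?q ^ (n - j) * f (Suc j))"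
    by (simp add: sum.distrib algebra_simps)
  have C: "(\<Sum>j\<le>n. real (n choose j) * p ^ Suc j * ?q ^ (n - j) * f (Suc j))
     = p * Bs p n (\<lambda>k. f (Suc k))"
    unfolding Bs_def by (simp add: sum_distrib_left algebra_simps)
  have D: "real (Suc n choose 0) * p^0 * ?q^(Suc n) * f 0
     + (\<Sum>j\<le>n. real (n choose Suc j) * p ^ Suc j * ?q ^ (n - j) * f (Suc j))
     = (\<Sum>k\<le>Suc n. real (n choose k) * p ^ k * ?q ^ (Suc n - k) * f k)"
    by (simp only: sum.atMost_Suc_shift) simp
  have E: "(\<Sum>k\<le>Suc n. real (n choose k) * p ^ k * ?q ^ (Suc n - k) * f k)
      = (\<Sum>k\<le>n. real (n choose k) * p ^ k * ?q ^ (Suc n - k) * f k)"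
    by simp
  have F: "(\<Sum>k\<le>n. real (n choose k) * p ^ k * ?q ^ (Suc n - k) * f k) = ?q * Bs p n f"
    unfolding Bs_def sum_distrib_left
    by (rule sum.cong) (auto simp: Suc_diff_le algebra_simps)
  show ?thesis using A B C D E F by simp
qed

lemma Bs_id: "Bs p n (\<lambda>k. real k) = real n * p"
proof (induction n)
  case 0 then show ?case by (simp add: Bs_def)
next
  case (Suc n)
  have "Bs p n (\<lambda>k. real (Suc k)) = Bs p n (\<lambda>k. 1 * real k + 1 * 1)"
    by (rule arg_cong[where f="Bs p n"]) auto
  also have "\<dots> = real n * p + Bs p n (\<lambda>_. 1)" by (simp only: Bs_lin) (simp add: Suc)
  finally have e: "Bs p n (\<lambda>k. real (Suc k)) = real n * p + Bs p n (\<lambda>_. 1)" .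
  have one: "Bs p n (\<lambda>_. 1) = 1"
    using binomial_ring[of p "1 - p" n] unfolding Bs_def by (simp add: atLeast0AtMost mult.commute)
  show ?case by (simp only: Bs_Suc e one Suc) (simp add: algebra_simps)
qed

lemma Bs_fall: "Bs p n (\<lambda>k. real k * (real k - 1)) = real n * (real n - 1) * p^2"
proof (induction n)
  case 0 then show ?case by (simp add: Bs_def)
next
  case (Suc n)
  have "Bs p n (\<lambda>k. real (Suc k) * (real (Suc k) - 1)) = Bs p n (\<lambda>k. 1 * (real k * (real k - 1)) + 2 * real k)"
    by (rule arg_cong[where f="Bs p n"]) (auto simp: algebra_simps)
  also have "\<dots> = real n * (real n - 1) * p^2 + 2 * (real n * p)" by (simp only: Bs_lin Suc Bs_id)
  finally have e: "Bs p n (\<lambda>k. real (Suc k) * (real (Suc k) - 1)) = real n * (real n - 1) * p^2 + 2 * (real n * p)" .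
  show ?case by (simp only: Bs_Suc e Suc) (simp add: power2_eq_square algebra_simps)
qed

theorem lemma6p4:
  fixes m :: nat and \<theta> :: real
  assumes "0 < \<theta>" and "\<theta> < 1"
  shows "measure_pmf.variance (binomial_pmf m \<theta>) (\<lambda>k. max (real k - 1) 0)
           = measure_pmf.variance (binomial_pmf m \<theta>) (\<lambda>k. real k - (if k \<ge> 1 then 1 else 0))
       \<and> measure_pmf.variance (binomial_pmf m \<theta>) (\<lambda>k. max (real k - 1) 0) \<le> (real m * \<theta>)^2"
proof
  have fe: "(\<lambda>k. max (real k - 1) 0) = (\<lambda>k::nat. real k - (if k \<ge> 1 then 1 else 0))"
    by (auto simp: max_def)
  then show "measure_pmf.variance (binomial_pmf m \<theta>) (\<lambda>k. max (real k - 1) 0)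
           = measure_pmf.variance (binomial_pmf m \<theta>) (\<lambda>k. real k - (if k \<ge> 1 then 1 else 0))"
    by (rule arg_cong[where f="measure_pmf.variance (binomial_pmf m \<theta>)"])
  have p: "\<theta> \<in> {0..1}" using assms by auto
  let ?Y = "\<lambda>k::nat. max (real k - 1) 0"
  have "measure_pmf.variance (binomial_pmf m \<theta>) ?Y
      = measure_pmf.expectation (binomial_pmf m \<theta>) (\<lambda>k. (?Y k)^2)
        - (measure_pmf.expectation (binomial_pmf m \<theta>) ?Y)^2"
    by (rule measure_pmf.variance_eq) (use p in auto)
  also have "\<dots> \<le> measure_pmf.expectation (binomial_pmf m \<theta>) (\<lambda>k. (?Y k)^2)" by simp
  also have "\<dots> = Bs \<theta> m (\<lambda>k. (?Y k)^2)"
    unfolding Bs_def by (subst expectation_binomial_pmf'[OF p]) simp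
  also have "\<dots> \<le> Bs \<theta> m (\<lambda>k. real k * (real k - 1))"
    unfolding Bs_def
  proof (rule sum_mono)
    fix k assume "k \<in> {..m}"
    have w: "0 \<le> real (m choose k) * \<theta> ^ k * (1 - \<theta>) ^ (m - k)" using assms by simp
    have "(?Y k)^2 \<le> real k * (real k - 1)"
      by (cases k) (auto simp: max_def power2_eq_square algebra_simps)
    then show "real (m choose k) * \<theta> ^ k * (1 - \<theta>) ^ (m - k) * (?Y k)^2
       \<le> real (m choose k) * \<theta> ^ k * (1 - \<theta>) ^ (m - k) * (real k * (real k - 1))"
      by (rule mult_left_mono[OF _ w])
  qed
  also have "\<dots> = real m * (real m - 1) * \<theta>^2" by (rule Bs_fall)
  also have "\<dots> \<le> (real m * \<theta>)^2" using assms by (simp add: power2_eq_square algebra_simps)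
  finally show "measure_pmf.variance (binomial_pmf m \<theta>) ?Y \<le> (real m * \<theta>)^2" .
qed

end
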